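(* Let $u(\mathbf t)\in\mathbb C[[t_0,t_1,t_2,\dots]]$ ($t_0=x$) be any solution of the KdV hierarchy, $(\psi,\psi^* )$ any pair of wave functions of $u$, and set $\psi(z)=\psi(z,\mathbf 0)$, $\psi_x(z)=\partial_x\psi(z,\mathbf t)|_{\mathbf t=\mathbf 0}$, similarly $\psi^*(z),\psi_x^*(z)$, and $b(\lambda)=b(\lambda,\mathbf 0)$, $b_x(\lambda)=\partial_xb(\lambda,\mathbf t)|_{\mathbf t=\mathbf 0}$. Then: (i) $D(z,w):=\frac{\psi(z)\psi^*_x(w)-\psi^*(w)\psi_x(z)}{w^2-z^2}$ satisfies $D(z,w)-\frac1{z-w}\in\mathbb C[[z^{-1},w^{-1}]]$, in the sense that there is $F\in\mathbb C[[z^{-1},w^{-1}]]$ with $\psi(z)\psi^*_x(w)-\psi^*(w)\psi_x(z)+(w+z)=(w^2-z^2)F$. (ii) With $K(z,w):=\frac{b(z^2)b_x(w^2)-b(w^2)b_x(z^2)}{2(w^2-z^2)}-\frac{w\,b(z^2)+z\,b(w^2)}{w^2-z^2}$, each of $K(z,w)-\frac{b(z^2)}{z-w}$, $K(z,w)-\frac{b(w^2)}{z-w}$, $K(z,w)-\frac12\frac{b(z^2)+b(w^2)}{z-w}$ lies in $\mathbb C[[z^{-1},w^{-1}]]$, in the sense that, with $M:=b(z^2)b_x(w^2)-b(w^2)b_x(z^2)$, each of $\frac M2+z(b(z^2)-b(w^2))$, $\frac M2-w(b(z^2)-b(w^2))$, $\frac M2+\frac{z-w}2(b(z^2)-b(w^2))$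 equals $(w^2-z^2)$ times an element of $\mathbb C[[z^{-1},w^{-1}]]$.
   Context: KdV hierarchy: $L=\partial_x^2+2u$, $A_k=\frac1{(2k+1)!!}(L^{(2k+1)/2})_+$; $u$ solves it if $\partial L/\partial t_k=[A_k,L]$ for all $k\ge0$. $b(\lambda,\mathbf t)=\sum_{k\ge-1}b_k(\mathbf t)\lambda^{-k-1}$, $b_{-1}=1$, is the unique such series with coefficients in $\mathbb C[[\mathbf t]]$ satisfying $bb_{xx}-\frac12b_x^2-2(\lambda-2u)b^2=-2\lambda$. Wave functions (with $V=\mathbb C[[x]]$ and a ring $\widetilde V$ with $V\subseteq\partial_x\widetilde V\subseteq\widetilde V$): $\xi=\sum_kt_kz^{2k+1}/(2k+1)!!$; a wave function is $\psi=(1+\sum_{m\ge1}\phi_m(\mathbf t)z^{-m})e^{\xi}$ with $L\psi=z^2\psi$, $\partial_{t_k}\psi=A_k\psi$; its dual is the unique $\psi^*=(1+\sum_{m\ge1}\phi^*_m(\mathbf t)z^{-m})e^{-\xi}$ with $L\psi^*=z^2\psi^*$, $\partial_{t_k}\psi^*=A_k\psi^*$, and $\partial_x^i(\psi)\psi^*$ (exponentials cancelling) having zero $z^{-1}$-coefficient for all $i\ge0$. At $\mathbf t=\mathbf0$ the exponentials equal $1$. *)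

theory Defs
  imports Complex_Main "HOL-Library.Poly_Mapping"
begin

text \<open>Monomials are finitely supported exponent vectors; an element of C[[t]] is its
  coefficient function.\<close>
type_synonym mon = "nat \<Rightarrow>\<^sub>0 nat"
type_synonym ps = "mon \<Rightarrow> complex"

definition ps0 :: ps where "ps0 = (\<lambda>_. 0)"
definition ps1 :: ps where "ps1 = (\<lambda>m. if m = 0 then 1 else 0)"
definition ps_add :: "ps \<Rightarrow> ps \<Rightarrow> ps" where "ps_add f g = (\<lambda>m. f m + g m)"
definition ps_sub :: "ps \<Rightarrow> ps \<Rightarrow> ps" where "ps_sub f g = (\<lambda>m. f m - g m)"
definition ps_smult :: "complex \<Rightarrow> ps \<Rightarrow> ps" where "ps_smult c f = (\<lambda>m. c * f m)"
definition ps_mult :: "ps \<Rightarrow> ps \<Rightarrow> ps" where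
  "ps_mult f g = (\<lambda>m. \<Sum>(a,b)\<in>{(a,b). a + b = m}. f a * g b)"
text \<open>partial derivative with respect to t_k (t_0 = x)\<close>
definition ps_deriv :: "nat \<Rightarrow> ps \<Rightarrow> ps" where
  "ps_deriv k f = (\<lambda>m. of_nat (Poly_Mapping.lookup m k + 1) * f (m + Poly_Mapping.single k 1))"
definition ps_at0 :: "ps \<Rightarrow> complex" where "ps_at0 f = f 0"

section \<open>Pseudo-differential operators  P = sum_j P j * d_x^j  (P j = 0 for large j)\<close>

type_synonym pdo = "int \<Rightarrow> ps"

definition pdo_mult :: "pdo \<Rightarrow> pdo \<Rightarrow> pdo" where
  "pdo_mult P Q = (\<lambda>n m. \<Sum>(i,j)\<in>{(i,j). n \<le> i + j \<and> P i \<noteq> ps0 \<and> Q j \<noteq> ps0}.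
      ((of_int i :: complex) gchoose nat (i + j - n)) *
      ps_mult (P i) ((ps_deriv 0 ^^ nat (i + j - n)) (Q j)) m)"

definition pdo_one :: pdo where "pdo_one = (\<lambda>j. if j = 0 then ps1 else ps0)"
definition pdo_pow :: "pdo \<Rightarrow> nat \<Rightarrow> pdo" where "pdo_pow P n = (pdo_mult P ^^ n) pdo_one"
definition pdo_sub :: "pdo \<Rightarrow> pdo \<Rightarrow> pdo" where "pdo_sub P Q = (\<lambda>j. ps_sub (P j) (Q j))"
definition pdo_tderiv :: "nat \<Rightarrow> pdo \<Rightarrow> pdo" where "pdo_tderiv k P = (\<lambda>j. ps_deriv k (P j))"

definition Lop :: "ps \<Rightarrow> pdo" where
  "Lop u = (\<lambda>j. if j = 2 then ps1 else if j = 0 then ps_smult 2 u else ps0)"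

definition sqrtL :: "ps \<Rightarrow> pdo" where
  "sqrtL u = (THE Q. Q 1 = ps1 \<and> (\<forall>j>1. Q j = ps0) \<and> pdo_mult Q Q = Lop u)"

definition dfact :: "nat \<Rightarrow> nat" where "dfact k = (\<Prod>i\<le>k. 2 * i + 1)"

definition Aop :: "ps \<Rightarrow> nat \<Rightarrow> pdo" where
  "Aop u k = (\<lambda>j. if 0 \<le> j then ps_smult (1 / of_nat (dfact k)) (pdo_pow (sqrtL u) (2 * k + 1) j)
                  else ps0)"

definition kdv_solution :: "ps \<Rightarrow> bool" where
  "kdv_solution u \<longleftrightarrow> (\<forall>k. pdo_tderiv k (Lop u) =
      pdo_sub (pdo_mult (Aop u k) (Lop u)) (pdo_mult (Lop u) (Aop u k)))"

text \<open>S n is the coefficient of z^n\<close>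
type_synonym lser = "int \<Rightarrow> ps"

definition lprod :: "lser \<Rightarrow> lser \<Rightarrow> lser" where
  "lprod A B = (\<lambda>n m. \<Sum>(a,b)\<in>{(a,b). a + b = n \<and> A a \<noteq> ps0 \<and> B b \<noteq> ps0}. ps_mult (A a) (B b) m)"

text \<open>series 1 + sum_{m>=1} phi_m z^(-m), given phi (with phi 0 = 1)\<close>
definition neg_ser :: "(nat \<Rightarrow> ps) \<Rightarrow> lser" where
  "neg_ser \<phi> = (\<lambda>n. if n \<le> 0 then \<phi> (nat (- n)) else ps0)"

text \<open>For W e^(s xi):  d_x (W e^(s xi)) = (dz s W) e^(s xi), i.e. dz s = d_x + s z\<close>
definition dz :: "complex \<Rightarrow> lser \<Rightarrow> lser" where
  "dz s W = (\<lambda>n. ps_add (ps_deriv 0 (W n)) (ps_smult s (W (n - 1))))"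

text \<open>For a differential operator P: P (W e^(s xi)) = (twist_app s P W) e^(s xi)\<close>
definition twist_app :: "complex \<Rightarrow> pdo \<Rightarrow> lser \<Rightarrow> lser" where
  "twist_app s P W = (\<lambda>n m. \<Sum>j\<in>{j. 0 \<le> j \<and> P j \<noteq> ps0}. ps_mult (P j) ((dz s ^^ nat j) W n) m)"

text \<open>d_(t_k) (W e^(s xi)) = (tk_app s k W) e^(s xi), since d_(t_k) xi = z^(2k+1)/(2k+1)!!\<close>
definition tk_app :: "complex \<Rightarrow> nat \<Rightarrow> lser \<Rightarrow> lser" where
  "tk_app s k W = (\<lambda>n. ps_add (ps_deriv k (W n))
                     (ps_smult (s / of_nat (dfact k)) (W (n - int (2 * k + 1)))))"

text \<open>psi = (1 + sum phi_m z^(-m)) e^xi is a wave function of u\<close>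
definition wave_function :: "ps \<Rightarrow> (nat \<Rightarrow> ps) \<Rightarrow> bool" where
  "wave_function u \<phi> \<longleftrightarrow> \<phi> 0 = ps1 \<and>
     twist_app 1 (Lop u) (neg_ser \<phi>) = (\<lambda>n. neg_ser \<phi> (n - 2)) \<and>
     (\<forall>k. tk_app 1 k (neg_ser \<phi>) = twist_app 1 (Aop u k) (neg_ser \<phi>))"

text \<open>psi* = (1 + sum phi*_m z^(-m)) e^(-xi) is the dual wave function of psi\<close>
definition dual_wave_function :: "ps \<Rightarrow> (nat \<Rightarrow> ps) \<Rightarrow> (nat \<Rightarrow> ps) \<Rightarrow> bool" where
  "dual_wave_function u \<phi> \<phi>s \<longleftrightarrow> \<phi>s 0 = ps1 \<and>
     twist_app (-1) (Lop u) (neg_ser \<phi>s) = (\<lambda>n. neg_ser \<phi>s (n - 2)) \<and>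
     (\<forall>k. tk_app (-1) k (neg_ser \<phi>s) = twist_app (-1) (Aop u k) (neg_ser \<phi>s)) \<and>
     (\<forall>i. lprod ((dz 1 ^^ i) (neg_ser \<phi>)) (neg_ser \<phi>s) (-1) = ps0)"

text \<open>bb j is b_(j-1), the coefficient of lambda^(-j).  As a Laurent series in lambda:\<close>
definition bser :: "(nat \<Rightarrow> ps) \<Rightarrow> lser" where "bser bb = neg_ser bb"

definition lser_x :: "lser \<Rightarrow> lser" where "lser_x S = (\<lambda>n. ps_deriv 0 (S n))"

text \<open>b b_xx - 1/2 b_x^2 - 2 (lambda - 2u) b^2 = -2 lambda, coefficientwise in lambda\<close>
definition b_equation :: "ps \<Rightarrow> (nat \<Rightarrow> ps) \<Rightarrow> bool" where
  "b_equation u bb \<longleftrightarrow> (let B = bser bb; B2 = lprod B B in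
     (\<forall>n. ps_add (ps_sub (ps_sub (lprod B (lser_x (lser_x B)) n)
                                  (ps_smult (1/2) (lprod (lser_x B) (lser_x B) n)))
                          (ps_smult 2 (B2 (n - 1))))
                  (ps_smult 4 (ps_mult u (B2 n)))
         = (if n = 1 then ps_smult (-2) ps1 else ps0)))"

text \<open>S a b is the coefficient of z^a w^b\<close>
type_synonym ser2 = "int \<Rightarrow> int \<Rightarrow> complex"

definition outer :: "(int \<Rightarrow> complex) \<Rightarrow> (int \<Rightarrow> complex) \<Rightarrow> ser2" where
  "outer f g = (\<lambda>a b. f a * g b)"
definition delta0 :: "int \<Rightarrow> complex" where "delta0 = (\<lambda>a. if a = 0 then 1 else 0)"
definition s2add :: "ser2 \<Rightarrow> ser2 \<Rightarrow> ser2" where "s2add S T = (\<lambda>a b. S a b + T a b)"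
definition s2sub :: "ser2 \<Rightarrow> ser2 \<Rightarrow> ser2" where "s2sub S T = (\<lambda>a b. S a b - T a b)"
definition s2scale :: "complex \<Rightarrow> ser2 \<Rightarrow> ser2" where "s2scale c S = (\<lambda>a b. c * S a b)"
definition mulz :: "ser2 \<Rightarrow> ser2" where "mulz S = (\<lambda>a b. S (a - 1) b)"
definition mulw :: "ser2 \<Rightarrow> ser2" where "mulw S = (\<lambda>a b. S a (b - 1))"
text \<open>element of C[[z^(-1), w^(-1)]]: F i j is the coefficient of z^(-i) w^(-j)\<close>
definition ext2 :: "(nat \<Rightarrow> nat \<Rightarrow> complex) \<Rightarrow> ser2" where
  "ext2 F = (\<lambda>a b. if a \<le> 0 \<and> b \<le> 0 then F (nat (- a)) (nat (- b)) else 0)"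
definition mul_w2_z2 :: "ser2 \<Rightarrow> ser2" where "mul_w2_z2 S = (\<lambda>a b. S a (b - 2) - S (a - 2) b)"

definition div_by_w2_z2 :: "ser2 \<Rightarrow> bool" where
  "div_by_w2_z2 S \<longleftrightarrow> (\<exists>F. S = mul_w2_z2 (ext2 F))"

definition at0 :: "lser \<Rightarrow> int \<Rightarrow> complex" where "at0 W = (\<lambda>n. ps_at0 (W n))"

text \<open>f(z^2) for f = sum_j c j lambda^(-j): coefficient of z^a\<close>
definition sq_ser :: "(nat \<Rightarrow> complex) \<Rightarrow> int \<Rightarrow> complex" where
  "sq_ser c = (\<lambda>a. if a \<le> 0 \<and> even a then c (nat (- a div 2)) else 0)"

end

theory Submission
  imports Defs "HOL-Computational_Algebra.Formal_Power_Series"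
begin
unbundle fps_syntax

definition pr :: "ps \<Rightarrow> complex fps" where "pr f = Abs_fps (\<lambda>n. f (Poly_Mapping.single 0 n))"

lemma pr_nth: "pr f $ n = f (Poly_Mapping.single 0 n)" by (simp add: pr_def)

lemma single0_eq: 
  assumes ab: "a + b = Poly_Mapping.single (0::nat) (n::nat)"
  shows "a = Poly_Mapping.single 0 (Poly_Mapping.lookup a 0)" "Poly_Mapping.lookup a 0 + Poly_Mapping.lookup b 0 = n"
proof -
  have lk: "Poly_Mapping.lookup a k + Poly_Mapping.lookup b k = Poly_Mapping.lookup (Poly_Mapping.single 0 n) k" for k
    using lookup_add[of a b k] ab by simp
  show "a = Poly_Mapping.single 0 (Poly_Mapping.lookup a 0)"
  proof (rule poly_mapping_eqI)
    fix k
    show "Poly_Mapping.lookup a k = Poly_Mapping.lookup (Poly_Mapping.single 0 (Poly_Mapping.lookup a 0)) k"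
    proof (cases "k = 0")
      case True then show ?thesis by simp
    next
      case False then show ?thesis using lk[of k] by (simp add: lookup_single_not_eq)
    qed
  qed
  show "Poly_Mapping.lookup a 0 + Poly_Mapping.lookup b 0 = n" using lk[of 0] by simp
qed

lemma pairs_single: "{(a,b). a + b = Poly_Mapping.single (0::nat) (n::nat)} =
   (\<lambda>i. (Poly_Mapping.single 0 i, Poly_Mapping.single 0 (n-i))) ` {0..n}"
proof (rule set_eqI, rule iffI)
  fix p assume "p \<in> {(a,b). a + b = Poly_Mapping.single (0::nat) (n::nat)}"
  then obtain a b where p: "p = (a,b)" and ab: "a + b = Poly_Mapping.single 0 n" by blast
  have ba: "b + a = Poly_Mapping.single 0 n" using ab by (simp add: add.commute)
  note A = single0_eq[OF ab] and B = single0_eq[OF ba]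
  have "b = Poly_Mapping.single 0 (n - Poly_Mapping.lookup a 0)" using B(1) A(2) by (metis add_diff_cancel_left')
  then show "p \<in> (\<lambda>i. (Poly_Mapping.single 0 i, Poly_Mapping.single 0 (n-i))) ` {0..n}"
    unfolding p using A by (intro image_eqI[of _ _ "Poly_Mapping.lookup a 0"]) auto
next
  fix p assume "p \<in> (\<lambda>i. (Poly_Mapping.single (0::nat) i, Poly_Mapping.single (0::nat) (n-i))) ` {0..n}"
  then obtain i where "i \<le> n" "p = (Poly_Mapping.single (0::nat) i, Poly_Mapping.single (0::nat) (n-i))" by auto
  then show "p \<in> {(a,b). a + b = Poly_Mapping.single (0::nat) (n::nat)}"
    by (simp add: single_add[symmetric])
qed

lemma pr_mult: "pr (ps_mult f g) = pr f * pr g"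
proof (rule fps_ext)
  fix n :: nat
  have inj: "inj_on (\<lambda>i. (Poly_Mapping.single (0::nat) i, Poly_Mapping.single 0 (n-i))) {0..n}"
    by (rule inj_onI) (metis Pair_inject lookup_single_eq)
  have "pr (ps_mult f g) $ n = (\<Sum>(a,b)\<in>(\<lambda>i. (Poly_Mapping.single 0 i, Poly_Mapping.single 0 (n-i))) ` {0..n}. f a * g b)"
    unfolding pr_nth ps_mult_def pairs_single by simp
  also have "\<dots> = (\<Sum>i=0..n. f (Poly_Mapping.single 0 i) * g (Poly_Mapping.single 0 (n-i)))"
    by (simp add: sum.reindex[OF inj])
  finally show "pr (ps_mult f g) $ n = (pr f * pr g) $ n"
    by (simp add: fps_mult_nth pr_nth)
qed

lemma pr_deriv: "pr (ps_deriv 0 f) = fps_deriv (pr f)"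
  by (rule fps_ext) (simp add: pr_nth ps_deriv_def single_add[symmetric])

lemma pr_add: "pr (ps_add f g) = pr f + pr g"
  by (rule fps_ext) (simp add: pr_nth ps_add_def)
lemma pr_sub: "pr (ps_sub f g) = pr f - pr g"
  by (rule fps_ext) (simp add: pr_nth ps_sub_def)
lemma pr_smult: "pr (ps_smult c f) = fps_const c * pr f"
  by (rule fps_ext) (simp add: pr_nth ps_smult_def)
lemma pr_0: "pr ps0 = 0"
  by (rule fps_ext) (simp add: pr_nth ps0_def)
lemma single_eq0_iff: "Poly_Mapping.single k v = 0 \<longleftrightarrow> v = 0"
  by (metis lookup_single_eq lookup_zero single_zero)

lemma pr_1: "pr ps1 = 1"
  by (rule fps_ext) (simp add: pr_nth ps1_def single_eq0_iff)
lemma pr_sum: "pr (\<lambda>m. \<Sum>j\<in>J. F j m) = (\<Sum>j\<in>J. pr (F j))"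
  by (rule fps_ext) (simp add: pr_nth fps_sum_nth)
lemma pr_at0: "pr f $ 0 = ps_at0 f"
  by (simp add: pr_nth ps_at0_def)


type_synonym bser = "complex fps fps"

definition Phi :: "int \<Rightarrow> lser \<Rightarrow> bser" where "Phi K S = Abs_fps (\<lambda>k. pr (S (K - int k)))"
definition supp :: "int \<Rightarrow> lser \<Rightarrow> bool" where "supp K S \<longleftrightarrow> (\<forall>n>K. S n = ps0)"
definition Dx :: "bser \<Rightarrow> bser" where "Dx f = Abs_fps (\<lambda>k. fps_deriv (f $ k))"

lemma Phi_nth: "Phi K S $ k = pr (S (K - int k))" by (simp add: Phi_def)
lemma Dx_nth: "Dx f $ k = fps_deriv (f $ k)" by (simp add: Dx_def)

lemma Dx_add: "Dx (f + g) = Dx f + Dx g" by (rule fps_ext) (simp add: Dx_nth)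
lemma Dx_diff: "Dx (f - g) = Dx f - Dx g" by (rule fps_ext) (simp add: Dx_nth)
lemma Dx_minus: "Dx (- f) = - Dx f" by (rule fps_ext) (simp add: Dx_nth)
lemma Dx_0: "Dx 0 = 0" by (rule fps_ext) (simp add: Dx_nth)
lemma Dx_mult: "Dx (f * g) = Dx f * g + f * Dx g"
proof (rule fps_ext)
  fix n
  have "Dx (f * g) $ n = (\<Sum>i=0..n. fps_deriv (f$i) * g$(n-i) + f$i * fps_deriv (g$(n-i)))"
    by (simp add: Dx_nth fps_mult_nth fps_deriv_sum algebra_simps)
  also have "\<dots> = (Dx f * g + f * Dx g) $ n"
    by (simp add: Dx_nth fps_mult_nth sum.distrib)
  finally show "Dx (f * g) $ n = (Dx f * g + f * Dx g) $ n" .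
qed
lemma Dx_X: "Dx fps_X = 0" by (rule fps_ext) (simp add: Dx_nth fps_X_def)
lemma Dx_Xpow: "Dx (fps_X ^ d) = 0"
  by (induction d) (simp_all add: Dx_mult Dx_X, rule fps_ext, simp add: Dx_nth)
lemma Dx_const: "Dx (fps_const c) = fps_const (fps_deriv c)"
  by (rule fps_ext) (simp add: Dx_nth)
lemma Dx_1: "Dx 1 = 0" by (rule fps_ext) (simp add: Dx_nth)

lemma Phi_add: "Phi K (\<lambda>n. ps_add (A n) (B n)) = Phi K A + Phi K B"
  by (rule fps_ext) (simp add: Phi_nth pr_add)
lemma Phi_multc: "Phi K (\<lambda>n. ps_mult f (A n)) = fps_const (pr f) * Phi K A"
  by (rule fps_ext) (simp add: Phi_nth pr_mult)
lemma Phi_sum: "Phi K (\<lambda>n m. \<Sum>j\<in>J. F j n m) = (\<Sum>j\<in>J. Phi K (F j))"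
  by (rule fps_ext) (simp add: Phi_nth fps_sum_nth pr_sum)
lemma Phi_shift2: "Phi K (\<lambda>n. A (n - 2)) = Phi (K - 2) A"
  by (rule fps_ext) (simp add: Phi_nth algebra_simps)

lemma supp_dz: "supp K A \<Longrightarrow> supp (K+1) (dz s A)"
  by (simp add: supp_def dz_def ps_add_def ps_deriv_def ps_smult_def ps0_def fun_eq_iff)

lemma Phi_dz: assumes "supp K A"
  shows "Phi (K+1) (dz s A) = fps_X * Dx (Phi K A) + fps_const (fps_const s) * Phi K A"
proof (rule fps_ext)
  fix k :: nat
  show "Phi (K+1) (dz s A) $ k = (fps_X * Dx (Phi K A) + fps_const (fps_const s) * Phi K A) $ k"
  proof (cases k)
    case 0
    have "A (K+1) = ps0" using assms by (simp add: supp_def)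
    then show ?thesis using 0
      by (simp add: Phi_nth dz_def pr_add pr_deriv pr_smult pr_0 fps_X_mult_nth)
  next
    case (Suc j)
    then show ?thesis
      by (simp add: Phi_nth Dx_nth dz_def pr_add pr_deriv pr_smult fps_X_mult_nth algebra_simps)
  qed
qed

lemma Phi_shift: assumes "supp K A"
  shows "Phi (K + int d) A = fps_X ^ d * Phi K A"
proof (rule fps_ext)
  fix k :: nat
  show "Phi (K + int d) A $ k = (fps_X ^ d * Phi K A) $ k"
  proof (cases "k < d")
    case True
    then have "A (K + int d - int k) = ps0" using assms by (simp add: supp_def)
    then show ?thesis using True by (simp add: Phi_nth fps_X_power_mult_nth pr_0)
  next
    case False
    then show ?thesis by (simp add: Phi_nth fps_X_power_mult_nth of_nat_diff algebra_simps)
  qed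
qed

lemma pr_lprod: "pr (lprod A B n) = (\<Sum>(a,b)\<in>{(a,b). a + b = n \<and> A a \<noteq> ps0 \<and> B b \<noteq> ps0}. pr (A a) * pr (B b))"
  by (rule fps_ext) (simp add: pr_nth lprod_def fps_sum_nth split_def pr_mult[symmetric])

lemma Phi_lprod: assumes A: "supp K1 A" and B: "supp K2 B"
  shows "Phi (K1 + K2) (lprod A B) = Phi K1 A * Phi K2 B"
proof (rule fps_ext)
  fix k :: nat
  define n where "n = K1 + K2 - int k"
  define g where "g = (\<lambda>(a,b). pr (A a) * pr (B b))"
  define Set where "Set = {(a,b). a + b = n \<and> A a \<noteq> ps0 \<and> B b \<noteq> ps0}"
  define h where "h = (\<lambda>i::nat. (K1 - int i, K2 - int k + int i))"
  define T where "T = h ` {0..k}"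
  have "Phi (K1 + K2) (lprod A B) $ k = sum g Set"
    by (simp add: Phi_nth pr_lprod n_def g_def Set_def)
  also have "\<dots> = sum g T"
  proof (rule sum.mono_neutral_left)
    show "finite T" by (simp add: T_def)
    show "Set \<subseteq> T"
    proof
      fix p assume "p \<in> Set"
      then obtain a b where p: "p = (a,b)" and ab: "a + b = n" "A a \<noteq> ps0" "B b \<noteq> ps0"
        by (auto simp: Set_def)
      have "a \<le> K1" "b \<le> K2" using ab A B by (auto simp: supp_def not_less[symmetric])
      then have "p = h (nat (K1 - a))" "nat (K1 - a) \<in> {0..k}"
        using ab(1) p by (auto simp: h_def n_def)
      then show "p \<in> T" by (auto simp: T_def)
    qed
    show "\<forall>i\<in>T - Set. g i = 0"
    proof
      fix p assume "p \<in> T - Set"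
      then obtain i where "p = h i" "p \<notin> Set" by (auto simp: T_def)
      then show "g p = 0" by (auto simp: h_def Set_def n_def g_def pr_0)
    qed
  qed
  also have "\<dots> = (\<Sum>i=0..k. g (h i))"
    unfolding T_def by (subst sum.reindex) (auto simp: inj_on_def h_def)
  also have "\<dots> = (Phi K1 A * Phi K2 B) $ k"
    by (auto simp: fps_mult_nth Phi_nth g_def h_def of_nat_diff algebra_simps intro!: sum.cong)
  finally show "Phi (K1 + K2) (lprod A B) $ k = (Phi K1 A * Phi K2 B) $ k" .
qed


definition Nop :: "complex \<Rightarrow> bser \<Rightarrow> bser" where
  "Nop s f = fps_X * Dx f + fps_const (fps_const s) * f"

lemma supp_neg: "supp 0 (neg_ser \<phi>)"
  by (simp add: supp_def neg_ser_def)

lemma Phi_neg_nth: "Phi 0 (neg_ser \<phi>) $ k = pr (\<phi> k)"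
  by (simp add: Phi_nth neg_ser_def)

lemma twist_Lop: "twist_app s (Lop u) A =
   (\<lambda>n m. \<Sum>j\<in>{0,2}. ps_mult (Lop u j) ((dz s ^^ nat j) A n) m)"
proof (intro ext)
  fix n m
  show "twist_app s (Lop u) A n m = (\<Sum>j\<in>{0,2}. ps_mult (Lop u j) ((dz s ^^ nat j) A n) m)"
    unfolding twist_app_def
  proof (rule sum.mono_neutral_left)
    show "finite {0::int,2}" by simp
    show "{j. 0 \<le> j \<and> Lop u j \<noteq> ps0} \<subseteq> {0,2}" by (auto simp: Lop_def)
    show "\<forall>i\<in>{0,2} - {j. 0 \<le> j \<and> Lop u j \<noteq> ps0}. ps_mult (Lop u i) ((dz s ^^ nat i) A n) m = 0"
      by (auto simp: ps_mult_def ps0_def)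
  qed
qed

lemma supp_dz_pow: "supp K A \<Longrightarrow> supp (K + int i) ((dz s ^^ i) A)"
proof (induction i)
  case 0 then show ?case by simp
next
  case (Suc i)
  then show ?case using supp_dz[of "K + int i" "(dz s ^^ i) A" s] by (simp add: algebra_simps)
qed

lemma Phi_dz_pow: "supp K A \<Longrightarrow> Phi (K + int i) ((dz s ^^ i) A) = (Nop s ^^ i) (Phi K A)"
proof (induction i)
  case 0 then show ?case by simp
next
  case (Suc i)
  have "Phi (K + int (Suc i)) ((dz s ^^ Suc i) A) = Phi (K + int i + 1) (dz s ((dz s ^^ i) A))"
    by (simp add: algebra_simps)
  also have "\<dots> = Nop s (Phi (K + int i) ((dz s ^^ i) A))"
    using Phi_dz[OF supp_dz_pow[OF Suc.prems, of i s]] by (simp add: Nop_def)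
  finally show ?case using Suc by simp
qed

lemma L_eq:
  assumes "twist_app s (Lop u) (neg_ser \<phi>) = (\<lambda>n. neg_ser \<phi> (n - 2))"
  shows "Nop s (Nop s (Phi 0 (neg_ser \<phi>))) + fps_const (fps_const 2 * pr u) * (fps_X^2 * Phi 0 (neg_ser \<phi>))
        = Phi 0 (neg_ser \<phi>)"
proof -
  let ?A = "neg_ser \<phi>"
  have "Phi 2 (twist_app s (Lop u) ?A) = Phi 2 (\<lambda>n. ?A (n - 2))" using assms by simp
  also have "\<dots> = Phi 0 ?A" by (simp add: Phi_shift2)
  finally have e: "Phi 2 (twist_app s (Lop u) ?A) = Phi 0 ?A" .
  have "Phi 2 (twist_app s (Lop u) ?A) = 
     fps_const (pr (Lop u 0)) * Phi 2 ?A + fps_const (pr (Lop u 2)) * Phi 2 ((dz s ^^ 2) ?A)"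
    unfolding twist_Lop Phi_sum by (simp add: Phi_multc)
  also have "Phi 2 ?A = fps_X^2 * Phi 0 ?A"
    using Phi_shift[OF supp_neg, of 2 \<phi>] by simp
  also have "Phi 2 ((dz s ^^ 2) ?A) = Nop s (Nop s (Phi 0 ?A))"
    using Phi_dz_pow[OF supp_neg, of 2 s \<phi>] by (simp add: numeral_2_eq_2)
  also have "pr (Lop u 0) = fps_const 2 * pr u" by (simp add: Lop_def pr_smult)
  also have "pr (Lop u 2) = 1" by (simp add: Lop_def pr_1)
  finally show ?thesis using e by (simp add: algebra_simps)
qed

lemma dual_eq:
  assumes "\<forall>i. lprod ((dz 1 ^^ i) (neg_ser \<phi>)) (neg_ser \<phi>s) (-1) = ps0"
  shows "((Nop 1 ^^ i) (Phi 0 (neg_ser \<phi>)) * Phi 0 (neg_ser \<phi>s)) $ (i+1) = 0"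
proof -
  have "(Nop 1 ^^ i) (Phi 0 (neg_ser \<phi>)) * Phi 0 (neg_ser \<phi>s) = 
        Phi (int i + 0) (lprod ((dz 1 ^^ i) (neg_ser \<phi>)) (neg_ser \<phi>s))"
    using Phi_lprod[OF supp_dz_pow[OF supp_neg, of i 1 \<phi>] supp_neg, of \<phi>s]
      Phi_dz_pow[OF supp_neg, of i 1 \<phi>] by simp
  also have "\<dots> $ (i+1) = 0" using assms by (simp add: Phi_nth pr_0)
  finally show ?thesis .
qed


definition sg :: "bser \<Rightarrow> bser" where "sg f = Abs_fps (\<lambda>k. (-1)^k * f $ k)"
lemma sg_nth: "sg f $ k = (-1)^k * f $ k" by (simp add: sg_def)

lemma sg_add: "sg (f + g) = sg f + sg g" by (rule fps_ext) (simp add: sg_nth algebra_simps)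
lemma sg_diff: "sg (f - g) = sg f - sg g" by (rule fps_ext) (simp add: sg_nth algebra_simps)
lemma sg_minus: "sg (- f) = - sg f" by (rule fps_ext) (simp add: sg_nth algebra_simps)
lemma sg_const: "sg (fps_const c) = fps_const c" by (rule fps_ext) (simp add: sg_nth)
lemma sg_1: "sg 1 = 1" by (rule fps_ext) (simp add: sg_nth)
lemma sg_numeral: "sg (numeral n) = numeral n" by (rule fps_ext) (simp add: sg_nth fps_numeral_nth)
lemma sg_X: "sg fps_X = - fps_X" by (rule fps_ext) (simp add: sg_nth fps_X_def)
lemma m1pow: "(-1::complex fps)^k = fps_const ((-1)^k)"
  by (induction k) (simp_all flip: fps_const_mult)
lemma sg_Dx: "sg (Dx f) = Dx (sg f)" by (rule fps_ext) (simp add: sg_nth Dx_nth m1pow)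
lemma sg_mult: "sg (f * g) = sg f * sg g"
proof (rule fps_ext)
  fix n
  have "sg (f * g) $ n = (\<Sum>i=0..n. (-1)^i * f$i * ((-1)^(n-i) * g$(n-i)))"
    unfolding sg_nth fps_mult_nth sum_distrib_left
  proof (rule sum.cong)
    fix i assume "i \<in> {0..n}"
    then have "(-1::complex fps)^n = (-1)^i * (-1)^(n-i)" by (simp add: power_add[symmetric])
    then show "(-1) ^ n * (f $ i * g $ (n - i)) = (-1)^i * f$i * ((-1)^(n-i) * g$(n-i))"
      by (simp add: algebra_simps)
  qed simp
  also have "\<dots> = (sg f * sg g) $ n" by (simp add: fps_mult_nth sg_nth)
  finally show "sg (f * g) $ n = (sg f * sg g) $ n" .
qed
lemma sg_sg: "sg (sg f) = f" 
  by (rule fps_ext) (simp add: sg_nth power_mult_distrib[symmetric])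

lemma ode0:
  fixes R :: bser and c :: "complex fps"
  assumes "fps_X * Dx R = fps_const c * R" "c \<noteq> 0"
  shows "R = 0"
proof -
  have e: "(fps_X * Dx R) $ k = c * R $ k" for k using assms(1) by simp
  have "R $ k = 0" for k
  proof (induction k)
    case 0 then show ?case using e[of 0] assms(2) by simp
  next
    case (Suc k)
    then show ?case using e[of "Suc k"] assms(2) by (simp add: Dx_nth)
  qed
  then show ?thesis by (simp add: fps_ext)
qed

lemma c2: "fps_const (fps_const 2) = (2::bser)" by (simp add: numeral_fps_const)

lemma Nop_Nop: "Nop s (Nop s f) = fps_X^2 * Dx (Dx f) + fps_const (fps_const (2*s)) * (fps_X * Dx f)
   + fps_const (fps_const (s*s)) * f"
  using c2 unfolding Nop_def
  by (simp add: Dx_add Dx_mult Dx_X Dx_const power2_eq_square algebra_simps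
      flip: fps_const_mult fps_const_add)


inductive good :: "bser \<Rightarrow> nat \<Rightarrow> bser \<Rightarrow> bool" for w where
  g0: "good w K 0"
| gen: "i \<le> K \<Longrightarrow> good w K (fps_const c * (fps_X^(K-i) * (Nop 1 ^^ i) w))"
| gadd: "good w K a \<Longrightarrow> good w K b \<Longrightarrow> good w K (a + b)"

lemma good_res:
  assumes E3: "\<And>i. ((Nop 1 ^^ i) w * y) $ (i+1) = 0"
  shows "good w K g \<Longrightarrow> (g * y) $ (K+1) = 0"
proof (induction rule: good.induct)
  case (gen i K c)
  have "(fps_const c * (fps_X^(K-i) * (Nop 1 ^^ i) w) * y) $ (K+1)
      = c * (fps_X^(K-i) * ((Nop 1 ^^ i) w * y)) $ (K+1)"
    by (simp add: mult.assoc)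
  also have "\<dots> = c * ((Nop 1 ^^ i) w * y) $ (i+1)"
    using gen.hyps by (simp add: fps_X_power_mult_nth Suc_diff_le)
  finally show ?case using E3 by simp
qed (simp_all add: distrib_right)

lemma Nop_add: "Nop s (a + b) = Nop s a + Nop s b"
  by (simp add: Nop_def Dx_add algebra_simps)
lemma Nop_0: "Nop s 0 = 0"
  by (simp add: Nop_def Dx_0)
lemma Nop_pow_add: "(Nop s ^^ i) (a + b) = (Nop s ^^ i) a + (Nop s ^^ i) b"
  by (induction i) (simp_all add: Nop_add)

lemma good_const: "good w K g \<Longrightarrow> good w K (fps_const c * g)"
proof (induction rule: good.induct)
  case g0 then show ?case by (simp add: good.g0)
next
  case (gen i K c')
  have eq: "fps_const c * (fps_const c' * (fps_X ^ (K - i) * (Nop 1 ^^ i) w)) =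
     fps_const (c * c') * (fps_X ^ (K - i) * (Nop 1 ^^ i) w)"
    by (simp add: mult.assoc[symmetric])
  show ?case unfolding eq using gen by (rule good.gen)
next
  case (gadd K a b) then show ?case by (simp add: distrib_left good.gadd)
qed

lemma good_X: "good w K g \<Longrightarrow> good w (Suc K) (fps_X * g)"
proof (induction rule: good.induct)
  case g0 then show ?case by (simp add: good.g0)
next
  case (gen i K c)
  then have p: "fps_X ^ (Suc K - i) = fps_X * fps_X ^ (K - i)" by (simp add: Suc_diff_le)
  have eq: "fps_X * (fps_const c * (fps_X ^ (K - i) * (Nop 1 ^^ i) w)) =
     fps_const c * (fps_X ^ (Suc K - i) * (Nop 1 ^^ i) w)"
    unfolding p by (simp add: ac_simps)
  have "i \<le> Suc K" using gen by simp
  then show ?case unfolding eq by (rule good.gen)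
next
  case (gadd K a b) then show ?case by (simp add: distrib_left good.gadd)
qed

lemma good_Xpow: "good w K g \<Longrightarrow> good w (K + m) (fps_X^m * g)"
  by (induction m) (simp_all add: good_X mult.assoc)

lemma Dx_gen: "Dx (fps_const c * (fps_X^m * v)) = 
   fps_const (fps_deriv c) * (fps_X^m * v) + fps_const c * (fps_X^m * Dx v)"
  by (simp add: Dx_mult Dx_const Dx_Xpow)

lemma good_Nop: "good w K g \<Longrightarrow> good w (Suc K) (Nop 1 g)"
proof (induction rule: good.induct)
  case g0 then show ?case by (simp add: good.g0 Nop_0)
next
  case (gen i K c)
  let ?v = "(Nop 1 ^^ i) w"
  have d: "Nop 1 (fps_const c * (fps_X ^ (K - i) * ?v)) = fps_X * (fps_const (fps_deriv c) * (fps_X ^ (K - i) * ?v) 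
      + fps_const c * (fps_X ^ (K - i) * Dx ?v)) + fps_const c * (fps_X ^ (K - i) * ?v)"
    by (simp add: Nop_def Dx_gen)
  have p: "fps_X ^ (Suc K - i) = fps_X * fps_X ^ (K - i)" "Suc K - Suc i = K - i"
    using gen by (simp_all add: Suc_diff_le)
  have n: "(Nop 1 ^^ Suc i) w = fps_X * Dx ?v + ?v" by (simp add: Nop_def)
  have "Nop 1 (fps_const c * (fps_X ^ (K - i) * ?v)) =
     fps_const (fps_deriv c) * (fps_X ^ (Suc K - i) * ?v) +
     fps_const c * (fps_X ^ (Suc K - Suc i) * (Nop 1 ^^ Suc i) w)"
    unfolding d p n by (simp add: algebra_simps)
  moreover have "good w (Suc K) (fps_const (fps_deriv c) * (fps_X ^ (Suc K - i) * ?v))"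
    using gen by (intro good.gen) simp
  moreover have "good w (Suc K) (fps_const c * (fps_X ^ (Suc K - Suc i) * (Nop 1 ^^ Suc i) w))"
    using gen by (intro good.gen) simp
  ultimately show ?case by (simp add: good.gadd)
next
  case (gadd K a b) then show ?case by (simp add: Nop_add good.gadd)
qed

lemma good_Nop_pow: "good w K g \<Longrightarrow> good w (K + m) ((Nop 1 ^^ m) g)"
  by (induction m) (simp_all add: good_Nop)

lemma good_w: "good w 0 w"
  using good.gen[of 0 0 w 1] by simp

lemma good_up2:
  assumes E1: "Nop 1 (Nop 1 w) + fps_const U * (fps_X^2 * w) = w"
  shows "good w K g \<Longrightarrow> good w (K+2) g"
proof (induction rule: good.induct)
  case g0 then show ?case by (simp add: good.g0)
next
  case (gen i K c)
  have v: "(Nop 1 ^^ i) w = (Nop 1 ^^ (i+2)) w + (Nop 1 ^^ i) (fps_const U * (fps_X^2 * w))"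
  proof -
    have "(Nop 1 ^^ i) w = (Nop 1 ^^ i) (Nop 1 (Nop 1 w) + fps_const U * (fps_X^2 * w))"
      using E1 by simp
    also have "\<dots> = (Nop 1 ^^ i) (Nop 1 (Nop 1 w)) + (Nop 1 ^^ i) (fps_const U * (fps_X^2 * w))"
      by (simp only: Nop_pow_add)
    also have "(Nop 1 ^^ i) (Nop 1 (Nop 1 w)) = (Nop 1 ^^ (i+2)) w"
    proof -
      have "(Nop 1 ^^ (i+2)) w = (Nop 1 ^^ i) ((Nop 1 ^^ 2) w)" by (simp only: funpow_add comp_apply)
      moreover have "(Nop 1 ^^ 2) w = Nop 1 (Nop 1 w)" by (simp add: numeral_2_eq_2)
      ultimately show ?thesis by simp
    qed
    finally show ?thesis .
  qed
  have a: "good w (K+2) (fps_const c * (fps_X^(K+2-(i+2)) * (Nop 1 ^^ (i+2)) w))"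
    by (rule good.gen) (use gen in simp)
  have "good w (0+2) (fps_X^2 * w)" by (rule good_Xpow[OF good_w])
  then have "good w 2 (fps_X^2 * w)" by (simp add: numeral_2_eq_2)
  then have "good w 2 (fps_const U * (fps_X^2 * w))" by (rule good_const)
  then have "good w (2 + i) ((Nop 1 ^^ i) (fps_const U * (fps_X^2 * w)))" by (rule good_Nop_pow)
  then have "good w (2 + i + (K - i)) (fps_X^(K-i) * (Nop 1 ^^ i) (fps_const U * (fps_X^2 * w)))"
    by (rule good_Xpow)
  moreover have "2 + i + (K - i) = K + 2" using gen by simp
  ultimately have "good w (K + 2) (fps_X^(K-i) * (Nop 1 ^^ i) (fps_const U * (fps_X^2 * w)))"
    by simp
  then have "good w (K + 2) (fps_const c * (fps_X^(K-i) * (Nop 1 ^^ i) (fps_const U * (fps_X^2 * w))))"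
    by (rule good_const)
  with a have "good w (K+2) (fps_const c * (fps_X^(K+2-(i+2)) * (Nop 1 ^^ (i+2)) w) + 
      fps_const c * (fps_X^(K-i) * (Nop 1 ^^ i) (fps_const U * (fps_X^2 * w))))"
    by (rule good.gadd)
  moreover have "fps_const c * (fps_X^(K-i) * (Nop 1 ^^ i) w) = 
      fps_const c * (fps_X^(K+2-(i+2)) * (Nop 1 ^^ (i+2)) w) + 
      fps_const c * (fps_X^(K-i) * (Nop 1 ^^ i) (fps_const U * (fps_X^2 * w)))"
  proof -
    have k: "K + 2 - (i + 2) = K - i" by simp
    show ?thesis by (subst v) (simp only: k distrib_left)
  qed
  ultimately show ?case by simp
next
  case (gadd K a b) then show ?case by (simp add: good.gadd)
qed

lemma good_even:
  assumes E1: "Nop 1 (Nop 1 w) + fps_const U * (fps_X^2 * w) = w"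
  shows "good w (2*j) w" "good w (2*j+1) (Nop 1 w)"
proof -
  show "good w (2*j) w"
  proof (induction j)
    case (Suc j)
    have "2 * Suc j = (2*j) + 2" by simp
    then show ?case using good_up2[OF E1 Suc.IH] by simp
  qed (simp add: good_w)
  have "good w 1 (Nop 1 w)" using good_Nop[OF good_w] by simp
  then show "good w (2*j+1) (Nop 1 w)"
  proof (induction j)
    case (Suc j)
    have "2 * Suc j + 1 = (2*j+1) + 2" by simp
    then show ?case using good_up2[OF E1 Suc.IH[OF Suc.prems]] by simp
  qed simp
qed


lemma cm2: "fps_const (fps_const (-2)) = (-2::bser)" by (simp add: numeral_fps_const)
lemma sg_0: "sg 0 = 0" by (rule fps_ext) (simp add: sg_nth)
lemma X_nz: "(fps_X :: bser) \<noteq> 0" by simp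

lemma core:
  fixes w y :: bser and U :: "complex fps"
  assumes E1: "Nop 1 (Nop 1 w) + fps_const U * (fps_X^2 * w) = w"
  and E2: "Nop (-1) (Nop (-1) y) + fps_const U * (fps_X^2 * y) = y"
  and E3: "\<And>i. ((Nop 1 ^^ i) w * y) $ (i+1) = 0"
  and w0: "w $ 0 = 1" and y0: "y $ 0 = 1"
  shows "w * (fps_X * Dx y - y) - (fps_X * Dx w + w) * y = -2"
    and "w * sg (fps_X * Dx y - y) + (fps_X * Dx w + w) * sg y = 0"
proof -
  let ?X = "fps_X :: bser"
  define Ew where "Ew = ?X * Dx (Dx w) + 2 * Dx w + fps_const U * (?X * w)"
  define Fy where "Fy = ?X * Dx (Dx y) - 2 * Dx y + fps_const U * (?X * y)"
  have "?X * Ew = 0" using E1 unfolding Ew_def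
    by (simp add: Nop_Nop c2 power2_eq_square algebra_simps)
  then have Ew0: "Ew = 0" by simp
  have "?X * Fy = 0" using E2 unfolding Fy_def
    by (simp add: Nop_Nop cm2 power2_eq_square algebra_simps)
  then have Fy0: "Fy = 0" by simp
  define x0 where "x0 = sg w"
  define ys where "ys = sg y"
  have sEw: "sg Ew = - (?X * Dx (Dx x0) - 2 * Dx x0 + fps_const U * (?X * x0))"
    unfolding Ew_def x0_def by (simp add: sg_add sg_mult sg_X sg_Dx sg_numeral sg_const algebra_simps)
  have sFy: "sg Fy = - (?X * Dx (Dx ys) + 2 * Dx ys + fps_const U * (?X * ys))"
    unfolding Fy_def ys_def by (simp add: sg_add sg_diff sg_mult sg_X sg_Dx sg_numeral sg_const algebra_simps)
  have Fx0: "?X * Dx (Dx x0) - 2 * Dx x0 + fps_const U * (?X * x0) = 0"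
  proof -
    have "sg Ew = 0" using Ew0 sg_0 by simp
    then have "- (?X * Dx (Dx x0) - 2 * Dx x0 + fps_const U * (?X * x0)) = 0" using sEw by metis
    then show ?thesis by (simp only: neg_equal_0_iff_equal)
  qed
  have Eys: "?X * Dx (Dx ys) + 2 * Dx ys + fps_const U * (?X * ys) = 0"
  proof -
    have "sg Fy = 0" using Fy0 sg_0 by simp
    then have "- (?X * Dx (Dx ys) + 2 * Dx ys + fps_const U * (?X * ys)) = 0" using sFy by metis
    then show ?thesis by (simp only: neg_equal_0_iff_equal)
  qed
  define R where "R = w * Dx ys - Dx w * ys"
  have "?X * Dx R + 2 * R = w * (?X * Dx (Dx ys) + 2 * Dx ys + fps_const U * (?X * ys))
          - Ew * ys"
    unfolding R_def Ew_def by (simp add: Dx_mult Dx_diff algebra_simps)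
  then have "?X * Dx R + 2 * R = 0" by (simp only: Eys Ew0 mult_zero_right mult_zero_left diff_zero)
  then have "?X * Dx R = - (2 * R)" by (simp add: eq_neg_iff_add_eq_0)
  also have "\<dots> = fps_const (-2) * R" by (simp add: neg_numeral_fps_const[symmetric])
  finally have "?X * Dx R = fps_const (-2) * R" .
  then have R0: "R = 0" by (rule ode0) simp
  define om where "om = x0 * Dx y - Dx x0 * y"
  have "?X * Dx om - 2 * om = x0 * Fy - (?X * Dx (Dx x0) - 2 * Dx x0 + fps_const U * (?X * x0)) * y"
    unfolding om_def Fy_def by (simp add: Dx_mult Dx_diff algebra_simps)
  then have "?X * Dx om - 2 * om = 0" by (simp only: Fx0 Fy0 mult_zero_right mult_zero_left diff_zero)
  then have "?X * Dx om = 2 * om" by simp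
  also have "\<dots> = fps_const 2 * om" by (simp add: numeral_fps_const[symmetric])
  finally have "?X * Dx om = fps_const 2 * om" .
  then have om0: "om = 0" by (rule ode0) simp
  have r1: "(w * y) $ (2*j+1) = 0" for j
    using good_res[OF E3 good_even(1)[OF E1, of j]] by simp
  have r2: "(Nop 1 w * y) $ (2*j+2) = 0" for j
    using good_res[OF E3 good_even(2)[OF E1, of j]] by simp
  have sP: "sg (w * y) = w * y"
  proof (rule fps_ext)
    fix k show "sg (w * y) $ k = (w * y) $ k"
    proof (cases "even k")
      case True then show ?thesis by (simp add: sg_nth)
    next
      case False then obtain j where "k = 2*j+1" by (metis oddE)
      then show ?thesis using r1[of j] by (simp add: sg_nth)
    qed
  qed
  have sQ: "sg (Nop 1 w * y) = 2 - Nop 1 w * y"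
  proof (rule fps_ext)
    fix k show "sg (Nop 1 w * y) $ k = (2 - Nop 1 w * y) $ k"
    proof (cases "k = 0")
      case True then show ?thesis using w0 y0 by (simp add: sg_nth Nop_def)
    next
      case k: False
      show ?thesis
      proof (cases "even k")
        case True
        then obtain j' where j': "k = 2*j'" by (rule evenE)
        then have "k = 2*(j'-1)+2" using k by simp
        then obtain j where "k = 2*j+2" by blast
        then show ?thesis using r2[of j] by (simp add: sg_nth fps_numeral_nth)
      next
        case False then show ?thesis using k by (simp add: sg_nth fps_numeral_nth)
      qed
    qed
  qed
  define E where "E = w * (?X * Dx y - y) - (?X * Dx w + w) * y + 2"
  define A1 where "A1 = x0 * Dx y - Dx x0 * y"
  define A2 where "A2 = x0 * ys - w * y"
  define A3 where "A3 = (x0 - ?X * Dx x0) * ys - (2 - (?X * Dx w + w) * y)"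
  have A10: "A1 = 0" using om0 by (simp add: A1_def om_def)
  have A20: "A2 = 0" using sP by (simp add: A2_def x0_def ys_def sg_mult)
  have A30: "A3 = 0" using sQ unfolding A3_def x0_def ys_def Nop_def
    by (simp add: sg_mult sg_add sg_X sg_Dx algebra_simps)
  have "x0 * E = ?X * w * A1 + (x0 - ?X * Dx x0) * A2 - x0 * A3"
    unfolding E_def A1_def A2_def A3_def by (simp add: algebra_simps)
  then have "x0 * E = 0" using A10 A20 A30 by simp
  moreover have "x0 \<noteq> 0"
  proof
    assume "x0 = 0" then have "x0 $ 0 = 0" by simp
    then show False using w0 by (simp add: x0_def sg_nth)
  qed
  ultimately have "E = 0" by simp
  then show "w * (?X * Dx y - y) - (?X * Dx w + w) * y = -2"
    by (simp add: E_def algebra_simps)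
  have "w * sg (?X * Dx y - y) + (?X * Dx w + w) * sg y = - (?X * R)"
    unfolding R_def ys_def by (simp add: sg_diff sg_mult sg_X sg_Dx algebra_simps)
  then show "w * sg (?X * Dx y - y) + (?X * Dx w + w) * sg y = 0" using R0 by simp
qed


definition Gs :: "ser2 \<Rightarrow> int \<Rightarrow> int \<Rightarrow> complex" where
  "Gs S p q = (\<Sum>k<nat (1 - q). S (p - 2 * int k) (q + 2 + 2 * int k))"

locale critl =
  fixes S :: ser2
  assumes supp: "\<And>a b. 1 < a \<or> 1 < b \<Longrightarrow> S a b = 0"
begin

lemma Gext: "nat (1 - q) \<le> n \<Longrightarrow> Gs S p q = (\<Sum>k<n. S (p - 2 * int k) (q + 2 + 2 * int k))"
  unfolding Gs_def
proof (rule sum.mono_neutral_left)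
  assume "nat (1 - q) \<le> n"
  show "finite {..<n}" by simp
  show "{..<nat (1 - q)} \<subseteq> {..<n}" using \<open>nat (1 - q) \<le> n\<close> by auto
  show "\<forall>i\<in>{..<n} - {..<nat (1 - q)}. S (p - 2 * int i) (q + 2 + 2 * int i) = 0"
    by (auto intro!: supp)
qed

lemma G_rec: "S a b = Gs S a (b - 2) - Gs S (a - 2) b"
proof -
  define m where "m = nat (3 - b)"
  have "Gs S a (b - 2) = (\<Sum>k<Suc m. S (a - 2 * int k) (b - 2 + 2 + 2 * int k))"
    by (rule Gext) (simp add: m_def)
  also have "\<dots> = S a b + (\<Sum>k<m. S (a - 2 - 2 * int k) (b + 2 + 2 * int k))"
    by (subst sum.lessThan_Suc_shift) (simp add: algebra_simps)
  also have "(\<Sum>k<m. S (a - 2 - 2 * int k) (b + 2 + 2 * int k)) = Gs S (a - 2) b"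
    by (rule Gext[symmetric]) (simp add: m_def)
  finally show ?thesis by simp
qed

lemma G_vanish_b: "0 < b \<Longrightarrow> Gs S a b = 0"
  by (simp add: Gs_def)

lemma G_vanish_a:
  assumes s1: "\<And>N. (\<Sum>a\<in>{N-1..1}. S a (N - a)) = 0"
  and s2: "\<And>N. (\<Sum>a\<in>{N-1..1}. (if even (N - a) then S a (N - a) else - S a (N - a))) = 0"
  and p: "0 < p"
  shows "Gs S p q = 0"
proof -
  define N where "N = p + q + 2"
  define I where "I = {N-1..1}"
  define J where "J = {a\<in>I. even (a - p)}"
  define f where "f = (\<lambda>a. S a (N - a))"
  have fin: "finite I" by (simp add: I_def)
  have "(\<Sum>a\<in>{a\<in>I. even (N - a)}. f a) + (\<Sum>a\<in>{a\<in>I. odd (N - a)}. f a) =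
     (\<Sum>a\<in>I. (if even (N-a) then f a else 0) + (if odd (N-a) then f a else 0))"
    by (simp add: sum.inter_filter[OF fin] sum.distrib)
  also have "\<dots> = (\<Sum>a\<in>I. f a)" by (rule sum.cong) auto
  finally have split: "(\<Sum>a\<in>I. f a) = (\<Sum>a\<in>{a\<in>I. even (N - a)}. f a) + (\<Sum>a\<in>{a\<in>I. odd (N - a)}. f a)"
    by simp
  have "(\<Sum>a\<in>{a\<in>I. even (N - a)}. f a) - (\<Sum>a\<in>{a\<in>I. odd (N - a)}. f a) =
     (\<Sum>a\<in>I. (if even (N-a) then f a else 0) - (if odd (N-a) then f a else 0))"
    by (simp add: sum.inter_filter[OF fin] sum_subtractf)
  also have "\<dots> = (\<Sum>a\<in>I. (if even (N - a) then f a else - f a))" by (rule sum.cong) auto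
  finally have s2': "(\<Sum>a\<in>I. (if even (N - a) then f a else - f a)) = 
     (\<Sum>a\<in>{a\<in>I. even (N - a)}. f a) - (\<Sum>a\<in>{a\<in>I. odd (N - a)}. f a)" by simp
  have "(\<Sum>a\<in>{a\<in>I. even (N - a)}. f a) = 0" "(\<Sum>a\<in>{a\<in>I. odd (N - a)}. f a) = 0"
    using s1[of N] s2[of N] split s2' unfolding I_def f_def by auto
  moreover have "J = {a\<in>I. even (N - a)} \<or> J = {a\<in>I. odd (N - a)}"
  proof (cases "even q")
    case True
    then have "\<And>a. even (a - p) \<longleftrightarrow> even (N - a)" unfolding N_def by presburger
    then show ?thesis unfolding J_def by auto
  next
    case False
    then have "\<And>a. even (a - p) \<longleftrightarrow> odd (N - a)" unfolding N_def by presburger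
    then show ?thesis unfolding J_def by auto
  qed
  ultimately have J0: "(\<Sum>a\<in>J. f a) = 0" by auto
  define n where "n = nat (1 - q)"
  define h where "h = (\<lambda>k::nat. p - 2 * int k)"
  have "Gs S p q = (\<Sum>k<n. f (h k))"
    unfolding Gs_def n_def f_def h_def N_def by (simp add: algebra_simps)
  also have "\<dots> = (\<Sum>a\<in>h ` {..<n}. f a)"
    by (subst sum.reindex) (auto simp: inj_on_def h_def)
  also have "\<dots> = (\<Sum>a\<in>J. f a)"
  proof (rule sum.mono_neutral_right)
    show "finite (h ` {..<n})" by simp
    show "J \<subseteq> h ` {..<n}"
    proof
      fix a assume "a \<in> J"
      then have a: "N - 1 \<le> a" "a \<le> 1" "even (a - p)" by (auto simp: J_def I_def)
      then obtain k where k: "p - a = 2 * k" by (metis evenE even_minus minus_diff_eq)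
      have "k \<ge> 0" using k a p by linarith
      have "a = h (nat k)" using k \<open>k \<ge> 0\<close> by (simp add: h_def)
      moreover have "nat k < n" using k a \<open>k \<ge> 0\<close> unfolding n_def N_def by linarith
      ultimately show "a \<in> h ` {..<n}" by blast
    qed
    show "\<forall>a\<in>h ` {..<n} - J. f a = 0"
    proof
      fix a assume "a \<in> h ` {..<n} - J"
      then obtain k where k: "a = h k" and nJ: "a \<notin> J" by auto
      have "even (a - p)" using k by (simp add: h_def)
      then have "a \<notin> I" using nJ by (simp add: J_def)
      then have "1 < a \<or> 1 < N - a" unfolding I_def by auto
      then show "f a = 0" unfolding f_def by (rule supp)
    qed
  qed
  finally show ?thesis using J0 by simp
qed

end

lemma crit:
  fixes S :: ser2
  assumes supp: "\<And>a b. 1 < a \<or> 1 < b \<Longrightarrow> S a b = 0"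
  and s1: "\<And>N. (\<Sum>a\<in>{N-1..1}. S a (N - a)) = 0"
  and s2: "\<And>N. (\<Sum>a\<in>{N-1..1}. (if even (N - a) then S a (N - a) else - S a (N - a))) = 0"
  shows "div_by_w2_z2 S"
proof -
  interpret critl S using supp by unfold_locales
  define F where "F = (\<lambda>i j. Gs S (- int i) (- int j))"
  have e: "ext2 F a b = Gs S a b" for a b
  proof (cases "a \<le> 0 \<and> b \<le> 0")
    case True then show ?thesis by (simp add: ext2_def F_def)
  next
    case False
    then have "0 < a \<or> 0 < b" by auto
    then show ?thesis using G_vanish_a[OF s1 s2] G_vanish_b False by (auto simp: ext2_def)
  qed
  have "S = mul_w2_z2 (ext2 F)"
    by (rule ext, rule ext) (simp add: mul_w2_z2_def e G_rec)
  then show ?thesis unfolding div_by_w2_z2_def by blast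
qed


definition crit_ok :: "ser2 \<Rightarrow> bool" where
  "crit_ok S \<longleftrightarrow> (\<forall>a b. 1 < a \<or> 1 < b \<longrightarrow> S a b = 0) \<and> (\<forall>N. (\<Sum>a\<in>{N-1..1}. S a (N-a)) = 0) \<and>
     (\<forall>N. (\<Sum>a\<in>{N-1..1}. (if even (N-a) then S a (N-a) else - S a (N-a))) = 0)"

lemma crit_ok_div: "crit_ok S \<Longrightarrow> div_by_w2_z2 S"
  unfolding crit_ok_def by (rule crit) auto

lemma sgn_add: "(if e then x + y else - (x + y)) = (if e then x else - x) + (if e then y else - (y::complex))"
  by simp
lemma sgn_sub: "(if e then x - y else - (x - y)) = (if e then x else - x) - (if e then y else - (y::complex))"
  by simp
lemma sgn_scale: "(if e then c * x else - (c * x)) = c * (if e then x else - (x::complex))"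
  by simp

lemma crit_ok_add: "crit_ok S \<Longrightarrow> crit_ok T \<Longrightarrow> crit_ok (s2add S T)"
  unfolding crit_ok_def s2add_def by (simp add: sum.distrib sgn_add)
lemma crit_ok_sub: "crit_ok S \<Longrightarrow> crit_ok T \<Longrightarrow> crit_ok (s2sub S T)"
  unfolding crit_ok_def s2sub_def by (simp add: sum_subtractf sgn_sub)
lemma crit_ok_scale: "crit_ok S \<Longrightarrow> crit_ok (s2scale c S)"
  unfolding crit_ok_def s2scale_def by (simp add: sum_distrib_left[symmetric] sgn_scale)

lemma sq_ser_pos: "0 < a \<Longrightarrow> sq_ser c a = 0" by (simp add: sq_ser_def)
lemma sq_ser_odd: "odd a \<Longrightarrow> sq_ser c a = 0" by (simp add: sq_ser_def)

lemma sumI_delta: "(\<Sum>a\<in>{N-1..(1::int)}. (if a = k then v else 0)) = (if N - 1 \<le> k \<and> k \<le> 1 then v else 0)"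
  by (simp add: sum.delta)

lemma crit_M:
  fixes B Bx :: "int \<Rightarrow> complex"
  assumes pB: "\<And>a. 0 < a \<Longrightarrow> B a = 0" and pBx: "\<And>a. 0 < a \<Longrightarrow> Bx a = 0"
  and oB: "\<And>a. odd a \<Longrightarrow> B a = 0" and oBx: "\<And>a. odd a \<Longrightarrow> Bx a = 0"
  shows "crit_ok (s2sub (outer B Bx) (outer Bx B))"
  unfolding crit_ok_def
proof (intro conjI allI impI)
  fix a b :: int assume "1 < a \<or> 1 < b"
  then show "s2sub (outer B Bx) (outer Bx B) a b = 0"
    by (auto simp: s2sub_def outer_def pB pBx)
next
  fix N :: int
  have r: "(\<Sum>a\<in>{N-1..1}. B a * Bx (N-a)) = (\<Sum>a\<in>{N-1..1}. B (N-a) * Bx a)"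
    by (rule sum.reindex_bij_witness[of _ "\<lambda>a. N - a" "\<lambda>a. N - a"]) auto
  show "(\<Sum>a\<in>{N-1..1}. s2sub (outer B Bx) (outer Bx B) a (N-a)) = 0"
    by (simp add: s2sub_def outer_def sum_subtractf r mult.commute)
  have "(\<Sum>a\<in>{N-1..1}. (if even (N-a) then s2sub (outer B Bx) (outer Bx B) a (N-a)
           else - s2sub (outer B Bx) (outer Bx B) a (N-a))) =
        (\<Sum>a\<in>{N-1..1}. s2sub (outer B Bx) (outer Bx B) a (N-a))"
    by (rule sum.cong) (auto simp: s2sub_def outer_def oB oBx)
  also have "\<dots> = 0" by (simp add: s2sub_def outer_def sum_subtractf r mult.commute)
  finally show "(\<Sum>a\<in>{N-1..1}. (if even (N-a) then s2sub (outer B Bx) (outer Bx B) a (N-a)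
           else - s2sub (outer B Bx) (outer Bx B) a (N-a))) = 0" .
qed

lemma crit_mulz:
  fixes B :: "int \<Rightarrow> complex"
  assumes pB: "\<And>a. 0 < a \<Longrightarrow> B a = 0" and oB: "\<And>a. odd a \<Longrightarrow> B a = 0"
  shows "crit_ok (mulz (s2sub (outer B delta0) (outer delta0 B)))"
  unfolding crit_ok_def
proof (intro conjI allI impI)
  let ?D = "mulz (s2sub (outer B delta0) (outer delta0 B))"
  fix a b :: int assume "1 < a \<or> 1 < b"
  then show "?D a b = 0"
    by (auto simp: mulz_def s2sub_def outer_def pB delta0_def)
next
  let ?D = "mulz (s2sub (outer B delta0) (outer delta0 B))"
  fix N :: int
  have t: "?D a (N - a) = (if a = N then B (N-1) else 0) - (if a = 1 then B (N - 1) else 0)" for a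
    by (simp add: mulz_def s2sub_def outer_def delta0_def)
  have B1: "\<not> N \<le> 1 \<Longrightarrow> B (N - 1) = 0" by (rule pB) simp
  show "(\<Sum>a\<in>{N-1..1}. ?D a (N-a)) = 0"
    unfolding t sum_subtractf sumI_delta using B1 by auto
  have t2: "(if even (N - a) then ?D a (N - a) else - ?D a (N - a)) =
     (if a = N then B (N-1) else 0) - (if a = 1 then B (N - 1) else 0)" for a
    using oB[of "N-1"] by (auto simp: mulz_def s2sub_def outer_def delta0_def)
  show "(\<Sum>a\<in>{N-1..1}. (if even (N-a) then ?D a (N-a) else - ?D a (N-a))) = 0"
    unfolding t2 sum_subtractf sumI_delta using B1 by auto
qed

lemma crit_mulw:
  fixes B :: "int \<Rightarrow> complex"
  assumes pB: "\<And>a. 0 < a \<Longrightarrow> B a = 0" and oB: "\<And>a. odd a \<Longrightarrow> B a = 0"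
  shows "crit_ok (s2scale (-1) (mulw (s2sub (outer B delta0) (outer delta0 B))))"
proof -
  let ?D = "mulw (s2sub (outer B delta0) (outer delta0 B))"
  have "crit_ok ?D"
  unfolding crit_ok_def
  proof (intro conjI allI impI)
    fix a b :: int assume "1 < a \<or> 1 < b"
    then show "?D a b = 0"
      by (auto simp: mulw_def s2sub_def outer_def pB delta0_def)
  next
    fix N :: int
    have t: "?D a (N - a) = (if a = N - 1 then B (N-1) else 0) - (if a = 0 then B (N - 1) else 0)" for a
      by (auto simp: mulw_def s2sub_def outer_def delta0_def)
    have B1: "\<not> N \<le> 1 \<Longrightarrow> B (N - 1) = 0" by (rule pB) simp
    show "(\<Sum>a\<in>{N-1..1}. ?D a (N-a)) = 0"
      unfolding t sum_subtractf sumI_delta using B1 by auto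
    have t2: "(if even (N - a) then ?D a (N - a) else - ?D a (N - a)) =
       (if a = 0 then B (N-1) else 0) - (if a = N - 1 then B (N - 1) else 0)" for a
      using oB[of "N-1"] by (auto simp: mulw_def s2sub_def outer_def delta0_def)
    show "(\<Sum>a\<in>{N-1..1}. (if even (N-a) then ?D a (N-a) else - ?D a (N-a))) = 0"
      unfolding t2 sum_subtractf sumI_delta using B1 by auto
  qed
  then show ?thesis by (rule crit_ok_scale)
qed

lemma s2sub_as_add: "s2sub S T = s2add S (s2scale (-1) T)"
  by (simp add: s2sub_def s2add_def s2scale_def fun_eq_iff)

lemma part2:
  fixes c cx :: "nat \<Rightarrow> complex"
  shows "(let B = sq_ser c; Bx = sq_ser cx;
         M = s2sub (outer B Bx) (outer Bx B);
         D = s2sub (outer B delta0) (outer delta0 B)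
     in div_by_w2_z2 (s2add (s2scale (1/2) M) (mulz D)) \<and>
        div_by_w2_z2 (s2sub (s2scale (1/2) M) (mulw D)) \<and>
        div_by_w2_z2 (s2add (s2scale (1/2) M) (s2scale (1/2) (s2sub (mulz D) (mulw D)))))"
proof -
  let ?B = "sq_ser c" and ?Bx = "sq_ser cx"
  let ?M = "s2sub (outer ?B ?Bx) (outer ?Bx ?B)"
  let ?D = "s2sub (outer ?B delta0) (outer delta0 ?B)"
  have M: "crit_ok ?M" by (rule crit_M) (simp_all add: sq_ser_pos sq_ser_odd)
  have Z: "crit_ok (mulz ?D)" by (rule crit_mulz) (simp_all add: sq_ser_pos sq_ser_odd)
  have W: "crit_ok (s2scale (-1) (mulw ?D))" by (rule crit_mulw) (simp_all add: sq_ser_pos sq_ser_odd)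
  have M2: "crit_ok (s2scale (1/2) ?M)" using M by (rule crit_ok_scale)
  have "crit_ok (s2add (s2scale (1/2) ?M) (mulz ?D))" using M2 Z by (rule crit_ok_add)
  moreover have "crit_ok (s2sub (s2scale (1/2) ?M) (mulw ?D))"
    unfolding s2sub_as_add[of "s2scale (1/2) ?M"] using M2 W by (rule crit_ok_add)
  moreover have "crit_ok (s2add (s2scale (1/2) ?M) (s2scale (1/2) (s2sub (mulz ?D) (mulw ?D))))"
    unfolding s2sub_as_add[of "mulz ?D"]
    by (intro crit_ok_add crit_ok_scale M2 Z W)
  ultimately show ?thesis by (simp add: Let_def crit_ok_div)
qed


lemma conv:
  fixes f1 f2 :: "int \<Rightarrow> complex"
  assumes z1: "\<And>a. K1 < a \<Longrightarrow> f1 a = 0" and z2: "\<And>b. K2 < b \<Longrightarrow> f2 b = 0"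
    and lo: "lo \<le> N - K2" and hi: "K1 \<le> hi"
  shows "(\<Sum>a\<in>{lo..hi}. f1 a * f2 (N - a)) = (if N \<le> K1 + K2 then
     (Abs_fps (\<lambda>k. f1 (K1 - int k)) * Abs_fps (\<lambda>k. f2 (K2 - int k))) $ nat (K1 + K2 - N) else 0)"
proof -
  have "(\<Sum>a\<in>{lo..hi}. f1 a * f2 (N - a)) = (\<Sum>a\<in>{N-K2..K1}. f1 a * f2 (N - a))"
  proof (rule sum.mono_neutral_right)
    show "finite {lo..hi}" by simp
    show "{N-K2..K1} \<subseteq> {lo..hi}" using lo hi by auto
    show "\<forall>a\<in>{lo..hi} - {N-K2..K1}. f1 a * f2 (N - a) = 0"
      using z1 z2 by force
  qed
  also have "\<dots> = (if N \<le> K1 + K2 then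
     (Abs_fps (\<lambda>k. f1 (K1 - int k)) * Abs_fps (\<lambda>k. f2 (K2 - int k))) $ nat (K1 + K2 - N) else 0)"
  proof (cases "N \<le> K1 + K2")
    case False then show ?thesis by simp
  next
    case True
    define m where "m = nat (K1 + K2 - N)"
    have "(\<Sum>a\<in>{N-K2..K1}. f1 a * f2 (N - a)) = (\<Sum>i\<in>{0..m}. f1 (K1 - int i) * f2 (N - (K1 - int i)))"
      by (rule sum.reindex_bij_witness[of _ "\<lambda>i. K1 - int i" "\<lambda>a. nat (K1 - a)"])
         (use True in \<open>auto simp: m_def\<close>)
    also have "\<dots> = (Abs_fps (\<lambda>k. f1 (K1 - int k)) * Abs_fps (\<lambda>k. f2 (K2 - int k))) $ m"
      unfolding fps_mult_nth
      by (rule sum.cong) (use True in \<open>auto simp: m_def of_nat_diff algebra_simps\<close>)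
    finally show ?thesis using True by (simp add: m_def)
  qed
  finally show ?thesis .
qed

lemma sgn_split: "(if e then x - y + d else - (x - y + d)) =
   (if e then x else - x) - (if e then y else - y) + (if e then d else - (d::complex))" by simp
lemma sgn_mult: "(if e then p * q else - (p * q)) = p * (if e then q else - (q::complex))" by simp

lemma part1_crit:
  fixes P Px Ps Psx :: "int \<Rightarrow> complex"
  assumes zP: "\<And>a. 0 < a \<Longrightarrow> P a = 0" and zPx: "\<And>a. 1 < a \<Longrightarrow> Px a = 0"
    and zPs: "\<And>a. 0 < a \<Longrightarrow> Ps a = 0" and zPsx: "\<And>a. 1 < a \<Longrightarrow> Psx a = 0"
    and id1: "Abs_fps (\<lambda>k. P (0 - int k)) * Abs_fps (\<lambda>k. Psx (1 - int k))
       - Abs_fps (\<lambda>k. Px (1 - int k)) * Abs_fps (\<lambda>k. Ps (0 - int k)) = -2"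
    and id2: "Abs_fps (\<lambda>k. P (0 - int k)) * Abs_fps (\<lambda>k. (-1)^k * Psx (1 - int k))
       + Abs_fps (\<lambda>k. Px (1 - int k)) * Abs_fps (\<lambda>k. (-1)^k * Ps (0 - int k)) = 0"
  shows "div_by_w2_z2 (s2add (s2sub (outer P Psx) (outer Px Ps))
                            (s2add (outer delta0 (\<lambda>b. if b = 1 then 1 else 0))
                                   (outer (\<lambda>a. if a = 1 then 1 else 0) delta0)))"
    (is "div_by_w2_z2 ?S")
proof (rule crit)
  fix a b :: int assume "1 < a \<or> 1 < b"
  then show "?S a b = 0"
    by (auto simp: s2add_def s2sub_def outer_def delta0_def zP zPx zPs zPsx)
next
  fix N :: int
  have dl: "(\<Sum>a\<in>{N-1..1}. delta0 a * (if N - a = 1 then 1 else 0) + (if a = 1 then 1 else 0) * delta0 (N - a))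
      = (if N = 1 then 2 else 0)"
  proof -
    have "(\<Sum>a\<in>{N-1..1}. delta0 a * (if N - a = 1 then 1 else 0) + (if a = 1 then 1 else 0) * delta0 (N - a))
       = (\<Sum>a\<in>{N-1..1}. (if a = 0 then (if N = 1 then 1 else 0) else 0) + (if a = 1 then (if N = 1 then 1 else 0) else 0))"
      by (rule sum.cong) (auto simp: delta0_def)
    then show ?thesis by (simp add: sum.distrib sumI_delta)
  qed
  have c1: "(\<Sum>a\<in>{N-1..1}. P a * Psx (N - a)) = (if N \<le> 0 + 1 then
     (Abs_fps (\<lambda>k. P (0 - int k)) * Abs_fps (\<lambda>k. Psx (1 - int k))) $ nat (0 + 1 - N) else 0)"
    by (rule conv) (use zP zPsx in auto)
  have c2: "(\<Sum>a\<in>{N-1..1}. Px a * Ps (N - a)) = (if N \<le> 1 + 0 then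
     (Abs_fps (\<lambda>k. Px (1 - int k)) * Abs_fps (\<lambda>k. Ps (0 - int k))) $ nat (1 + 0 - N) else 0)"
    by (rule conv) (use zPx zPs in auto)
  have "(\<Sum>a\<in>{N-1..1}. ?S a (N - a)) = (\<Sum>a\<in>{N-1..1}. P a * Psx (N - a)) - (\<Sum>a\<in>{N-1..1}. Px a * Ps (N - a))
     + (\<Sum>a\<in>{N-1..1}. delta0 a * (if N - a = 1 then 1 else 0) + (if a = 1 then 1 else 0) * delta0 (N - a))"
    by (simp add: s2add_def s2sub_def outer_def sum.distrib sum_subtractf)
  also have "\<dots> = (if N \<le> 1 then (Abs_fps (\<lambda>k. P (0 - int k)) * Abs_fps (\<lambda>k. Psx (1 - int k))
       - Abs_fps (\<lambda>k. Px (1 - int k)) * Abs_fps (\<lambda>k. Ps (0 - int k))) $ nat (1 - N) else 0)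
       + (if N = 1 then 2 else 0)"
    unfolding c1 c2 dl by simp
  also have "\<dots> = 0" unfolding id1 by (auto simp: fps_numeral_nth)
  finally show "(\<Sum>a\<in>{N-1..1}. ?S a (N - a)) = 0" .
next
  fix N :: int
  define sPsx where "sPsx = (\<lambda>b. if even b then Psx b else - Psx b)"
  define sPs where "sPs = (\<lambda>b. if even b then Ps b else - Ps b)"
  have dl: "(\<Sum>a\<in>{N-1..1}. (if even (N - a) then delta0 a * (if N - a = 1 then 1 else 0) + (if a = 1 then 1 else 0) * delta0 (N - a)
     else - (delta0 a * (if N - a = 1 then 1 else 0) + (if a = 1 then 1 else 0) * delta0 (N - a)))) = 0"
  proof -
    have "(\<Sum>a\<in>{N-1..1}. (if even (N - a) then delta0 a * (if N - a = 1 then 1 else 0) + (if a = 1 then 1 else 0) * delta0 (N - a)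
     else - (delta0 a * (if N - a = 1 then 1 else 0) + (if a = 1 then 1 else 0) * delta0 (N - a))))
       = (\<Sum>a\<in>{N-1..1}. (if a = 0 then (if N = 1 then -1 else 0) else 0) + (if a = 1 then (if N = 1 then 1 else 0) else 0))"
      by (rule sum.cong) (auto simp: delta0_def)
    then show ?thesis by (simp add: sum.distrib sumI_delta)
  qed
  have c1: "(\<Sum>a\<in>{N-1..1}. P a * sPsx (N - a)) = (if N \<le> 0 + 1 then
     (Abs_fps (\<lambda>k. P (0 - int k)) * Abs_fps (\<lambda>k. sPsx (1 - int k))) $ nat (0 + 1 - N) else 0)"
    by (rule conv) (use zP zPsx in \<open>auto simp: sPsx_def\<close>)
  have c2: "(\<Sum>a\<in>{N-1..1}. Px a * sPs (N - a)) = (if N \<le> 1 + 0 then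
     (Abs_fps (\<lambda>k. Px (1 - int k)) * Abs_fps (\<lambda>k. sPs (0 - int k))) $ nat (1 + 0 - N) else 0)"
    by (rule conv) (use zPx zPs in \<open>auto simp: sPs_def\<close>)
  have e1: "Abs_fps (\<lambda>k. sPsx (1 - int k)) = - Abs_fps (\<lambda>k. (-1)^k * Psx (1 - int k))"
    by (rule fps_ext) (auto simp: sPsx_def)
  have e2: "Abs_fps (\<lambda>k. sPs (0 - int k)) = Abs_fps (\<lambda>k. (-1)^k * Ps (0 - int k))"
    by (rule fps_ext) (auto simp: sPs_def)
  have "(\<Sum>a\<in>{N-1..1}. (if even (N - a) then ?S a (N - a) else - ?S a (N - a))) =
     (\<Sum>a\<in>{N-1..1}. P a * sPsx (N - a)) - (\<Sum>a\<in>{N-1..1}. Px a * sPs (N - a))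
     + (\<Sum>a\<in>{N-1..1}. (if even (N - a) then delta0 a * (if N - a = 1 then 1 else 0) + (if a = 1 then 1 else 0) * delta0 (N - a)
     else - (delta0 a * (if N - a = 1 then 1 else 0) + (if a = 1 then 1 else 0) * delta0 (N - a))))"
    unfolding s2add_def s2sub_def outer_def sgn_split sum.distrib sum_subtractf sgn_mult sPsx_def sPs_def
    by simp
  also have "\<dots> = (if N \<le> 1 then - (Abs_fps (\<lambda>k. P (0 - int k)) * Abs_fps (\<lambda>k. (-1)^k * Psx (1 - int k))
       + Abs_fps (\<lambda>k. Px (1 - int k)) * Abs_fps (\<lambda>k. (-1)^k * Ps (0 - int k))) $ nat (1 - N) else 0)"
    unfolding c1 c2 dl e1 e2 by simp
  also have "\<dots> = 0" unfolding id2 by simp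
  finally show "(\<Sum>a\<in>{N-1..1}. (if even (N - a) then ?S a (N - a) else - ?S a (N - a))) = 0" .
qed


definition ev :: "bser \<Rightarrow> complex fps" where "ev g = Abs_fps (\<lambda>k. (g $ k) $ 0)"

lemma ev_mult: "ev (f * g) = ev f * ev g"
  by (rule fps_ext) (simp add: ev_def fps_mult_nth fps_sum_nth)
lemma ev_add: "ev (f + g) = ev f + ev g" by (rule fps_ext) (simp add: ev_def)
lemma ev_diff: "ev (f - g) = ev f - ev g" by (rule fps_ext) (simp add: ev_def)
lemma ev_0: "ev 0 = 0" by (rule fps_ext) (simp add: ev_def)
lemma ev_m2: "ev (-2) = -2"
  by (rule fps_ext) (simp add: ev_def fps_numeral_nth)

lemma ev_Phi: "Abs_fps (\<lambda>k. at0 S (K - int k)) = ev (Phi K S)"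
  by (rule fps_ext) (simp add: ev_def Phi_nth pr_at0 at0_def)
lemma ev_sg_Phi: "Abs_fps (\<lambda>k. (-1)^k * at0 S (K - int k)) = ev (sg (Phi K S))"
  by (rule fps_ext) (simp add: ev_def sg_nth Phi_nth pr_at0 at0_def m1pow)

lemma m1c: "fps_const (fps_const (-1 :: complex)) = (-1 :: bser)"
  by (metis fps_const_1_eq_1 fps_const_neg)

lemma supp_at0: "supp K S \<Longrightarrow> K < a \<Longrightarrow> at0 S a = 0"
  by (simp add: supp_def at0_def ps_at0_def ps0_def)

lemma part1:
  assumes wf: "wave_function u \<phi>" and dwf: "dual_wave_function u \<phi> \<phi>s"
  shows "(let P = at0 (neg_ser \<phi>); Px = at0 (dz 1 (neg_ser \<phi>));
         Ps = at0 (neg_ser \<phi>s); Psx = at0 (dz (-1) (neg_ser \<phi>s))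
     in div_by_w2_z2 (s2add (s2sub (outer P Psx) (outer Px Ps))
                            (s2add (outer delta0 (\<lambda>b. if b = 1 then 1 else 0))
                                   (outer (\<lambda>a. if a = 1 then 1 else 0) delta0))))"
proof -
  let ?W = "neg_ser \<phi>" and ?Y = "neg_ser \<phi>s"
  let ?w = "Phi 0 ?W" and ?y = "Phi 0 ?Y"
  have E1: "Nop 1 (Nop 1 ?w) + fps_const (fps_const 2 * pr u) * (fps_X^2 * ?w) = ?w"
    using wf by (intro L_eq) (simp add: wave_function_def)
  have E2: "Nop (-1) (Nop (-1) ?y) + fps_const (fps_const 2 * pr u) * (fps_X^2 * ?y) = ?y"
    using dwf by (intro L_eq) (simp add: dual_wave_function_def)
  have E3: "((Nop 1 ^^ i) ?w * ?y) $ (i+1) = 0" for i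
    using dwf by (intro dual_eq) (simp add: dual_wave_function_def)
  have w0: "?w $ 0 = 1" using wf by (simp add: Phi_neg_nth wave_function_def pr_1)
  have y0: "?y $ 0 = 1" using dwf by (simp add: Phi_neg_nth dual_wave_function_def pr_1)
  note C = core[OF E1 E2 E3 w0 y0]
  have b: "Phi 1 (dz 1 ?W) = fps_X * Dx ?w + ?w"
    using Phi_dz[OF supp_neg, of 1 \<phi>] by simp
  have d: "Phi 1 (dz (-1) ?Y) = fps_X * Dx ?y - ?y"
    using Phi_dz[OF supp_neg, of "-1" \<phi>s] by (simp add: m1c)
  have sW: "supp 1 (dz 1 ?W)" using supp_dz[OF supp_neg] by simp
  have sY: "supp 1 (dz (-1) ?Y)" using supp_dz[OF supp_neg] by simp
  have id1: "Abs_fps (\<lambda>k. at0 ?W (0 - int k)) * Abs_fps (\<lambda>k. at0 (dz (-1) ?Y) (1 - int k))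
       - Abs_fps (\<lambda>k. at0 (dz 1 ?W) (1 - int k)) * Abs_fps (\<lambda>k. at0 ?Y (0 - int k)) = -2"
    unfolding ev_Phi b d using arg_cong[OF C(1), of ev] by (simp add: ev_mult ev_diff ev_add ev_m2)
  have id2: "Abs_fps (\<lambda>k. at0 ?W (0 - int k)) * Abs_fps (\<lambda>k. (-1)^k * at0 (dz (-1) ?Y) (1 - int k))
       + Abs_fps (\<lambda>k. at0 (dz 1 ?W) (1 - int k)) * Abs_fps (\<lambda>k. (-1)^k * at0 ?Y (0 - int k)) = 0"
    unfolding ev_Phi ev_sg_Phi b d using arg_cong[OF C(2), of ev] by (simp add: ev_mult ev_diff ev_add ev_0)
  show ?thesis unfolding Let_def
    by (rule part1_crit[OF _ _ _ _ id1 id2])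
       (auto intro: supp_at0[OF supp_neg] supp_at0[OF sW] supp_at0[OF sY])
qed

theorem corollary1p6:
  fixes u :: ps and \<phi> \<phi>s bb :: "nat \<Rightarrow> ps"
  assumes "kdv_solution u"
    and "wave_function u \<phi>"
    and "dual_wave_function u \<phi> \<phi>s"
    and "bb 0 = ps1" and "b_equation u bb"
  shows
    "(let P = at0 (neg_ser \<phi>); Px = at0 (dz 1 (neg_ser \<phi>));
         Ps = at0 (neg_ser \<phi>s); Psx = at0 (dz (-1) (neg_ser \<phi>s))
     in div_by_w2_z2 (s2add (s2sub (outer P Psx) (outer Px Ps))
                            (s2add (outer delta0 (\<lambda>b. if b = 1 then 1 else 0))
                                   (outer (\<lambda>a. if a = 1 then 1 else 0) delta0))))
    \<and> (let B = sq_ser (\<lambda>j. ps_at0 (bb j)); Bx = sq_ser (\<lambda>j. ps_at0 (ps_deriv 0 (bb j)));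
         M = s2sub (outer B Bx) (outer Bx B);
         D = s2sub (outer B delta0) (outer delta0 B)
     in div_by_w2_z2 (s2add (s2scale (1/2) M) (mulz D)) \<and>
        div_by_w2_z2 (s2sub (s2scale (1/2) M) (mulw D)) \<and>
        div_by_w2_z2 (s2add (s2scale (1/2) M) (s2scale (1/2) (s2sub (mulz D) (mulw D)))))"
  using part1[OF assms(2,3)] part2 by blast


end
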